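(* $c(7)=5$, $c(8)=6$, and $c(9)=6$.
   Context: For a prime power $q$, $\mathbb{F}_q$ is the finite field with $q$ elements. The Hamming distance on $\mathbb{F}_q^3$ is $d(u,v)=|\{i: u_i\ne v_i\}|$; $B(u)=\{v : d(u,v)\le 1\}$; the extended ball is $E(u)=\bigcup_{\lambda\in\mathbb{F}_q} B(\lambda u)$. A subset $\mathcal{H}\subseteq \mathbb{F}_q^3$ is a short covering of $\mathbb{F}_q^3$ if $\bigcup_{h\in\mathcal{H}} E(h)=\mathbb{F}_q^3$, and $c(q)$ denotes the minimum cardinality of a short covering of $\mathbb{F}_q^3$. *)

theory Defs
  imports "HOL-Analysis.Finite_Cartesian_Product"
begin

definition hdist :: "'a ^ 3 \<Rightarrow> 'a ^ 3 \<Rightarrow> nat" where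
  "hdist u v = card {i. u $ i \<noteq> v $ i}"

definition hball :: "'a ^ 3 \<Rightarrow> ('a ^ 3) set" where
  "hball u = {v. hdist u v \<le> 1}"

definition ext_ball :: "('a::field) ^ 3 \<Rightarrow> ('a ^ 3) set" where
  "ext_ball u = (\<Union>l\<in>(UNIV :: 'a set). hball (\<chi> i. l * u $ i))"

definition short_covering :: "(('a::field) ^ 3) set \<Rightarrow> bool" where
  "short_covering H \<longleftrightarrow> (\<Union>h\<in>H. ext_ball h) = UNIV"

text \<open>c(q) for the finite field 'a with q = CARD('a) elements.\<close>
definition c_cov :: "('a::{field,finite}) itself \<Rightarrow> nat" where
  "c_cov (_ :: 'a itself) = (LEAST n. \<exists>H :: ('a ^ 3) set. short_covering H \<and> card H = n)"

end

theory Submission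
  imports Defs "HOL-Analysis.Cartesian_Space"
begin


definition v3 :: "'a \<Rightarrow> 'a \<Rightarrow> 'a \<Rightarrow> 'a ^ 3" where
  "v3 a b c = (\<chi> i. if i = 1 then a else if i = 2 then b else c)"

lemma three_neq: "(1::3) \<noteq> 2" "(1::3) \<noteq> 3" "(2::3) \<noteq> 3" "(2::3) \<noteq> 1" "(3::3) \<noteq> 1" "(3::3) \<noteq> 2"
  by simp_all

lemma v3_nth[simp]: "v3 a b c $ 1 = a" "v3 a b c $ 2 = b" "v3 a b c $ 3 = c"
  by (simp_all add: v3_def)

lemma v3_eq_iff: "v3 a b c = v3 a' b' c' \<longleftrightarrow> a = a' \<and> b = b' \<and> c = c'"
  by (auto simp: vec_eq_iff forall_3)

definition agree2 :: "'a ^ 3 \<Rightarrow> 'a ^ 3 \<Rightarrow> bool" where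
  "agree2 u v \<longleftrightarrow> (u$1 = v$1 \<and> u$2 = v$2) \<or> (u$1 = v$1 \<and> u$3 = v$3) \<or> (u$2 = v$2 \<and> u$3 = v$3)"

lemma hdist_le1: "hdist u v \<le> 1 \<longleftrightarrow> agree2 u v"
proof -
  have "hdist u v \<le> 1 \<longleftrightarrow> (\<forall>a\<in>{i. u $ i \<noteq> v $ i}. \<forall>b\<in>{i. u $ i \<noteq> v $ i}. a = b)"
    unfolding hdist_def using card_le_Suc0_iff_eq[of "{i. u $ i \<noteq> v $ i}"] by simp
  also have "\<dots> \<longleftrightarrow> agree2 u v"
    unfolding agree2_def Ball_def mem_Collect_eq forall_3 by auto
  finally show ?thesis .
qed

lemma ext_ball_iff: "x \<in> ext_ball h \<longleftrightarrow> (\<exists>l. agree2 (\<chi> i. l * h $ i) x)"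
  unfolding ext_ball_def hball_def mem_Collect_eq hdist_le1 by auto

lemma agree2_smult: "agree2 (\<chi> i. l * h $ i) x \<longleftrightarrow>
   (l * h$1 = x$1 \<and> l * h$2 = x$2) \<or> (l * h$1 = x$1 \<and> l * h$3 = x$3) \<or> (l * h$2 = x$2 \<and> l * h$3 = x$3)"
  by (simp add: agree2_def)



lemma card2: "finite S \<Longrightarrow> x \<in> S \<Longrightarrow> y \<in> S \<Longrightarrow> x \<noteq> y \<Longrightarrow> 2 \<le> card S"
  using card_mono[of S "{x,y}"] by auto

lemma sets_aux:
  assumes "finite A" "finite B" "finite C" "A \<noteq> {}" "B \<noteq> {}" "C \<noteq> {}" "A \<inter> B \<inter> C = {}"
    and "\<not> 2 \<le> card (A \<union> B)"
  shows "2 \<le> card (A \<union> C) \<and> 2 \<le> card (B \<union> C)"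
proof -
  obtain a where a: "a \<in> A" using assms by auto
  obtain b where b: "b \<in> B" using assms by auto
  have ab: "a = b" using card2[of "A \<union> B" a b] a b assms by auto
  obtain c where c: "c \<in> C" using assms by auto
  have "c \<noteq> a" using a b ab c assms(7) by auto
  then show ?thesis using card2[of "A \<union> C" a c] card2[of "B \<union> C" b c] a b c ab assms by auto
qed

lemma sets5:
  assumes "finite A" "finite B" "finite C" "A \<noteq> {}" "B \<noteq> {}" "C \<noteq> {}" "A \<inter> B \<inter> C = {}"
  shows "5 \<le> card (A \<union> B) + card (A \<union> C) + card (B \<union> C)"
proof -
  have p: "card (A \<union> B) \<ge> 1" "card (A \<union> C) \<ge> 1" "card (B \<union> C) \<ge> 1"
    using assms by (auto simp: Suc_le_eq card_gt_0_iff)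
  have i1: "A \<inter> C \<inter> B = {}" "B \<inter> C \<inter> A = {}" using assms(7) by auto
  show ?thesis
  proof (cases "2 \<le> card (A \<union> B)")
    case False then show ?thesis using sets_aux[OF assms] p by linarith
  next
    case T1: True
    show ?thesis
    proof (cases "2 \<le> card (A \<union> C)")
      case False then show ?thesis using sets_aux[of A C B] assms i1 p T1 by (simp add: Un_commute)
    next
      case T2: True
      show ?thesis
      proof (cases "2 \<le> card (B \<union> C)")
        case False then show ?thesis using sets_aux[of B C A] assms i1 p T1 T2 by (simp add: Un_commute)
      next
        case True then show ?thesis using T1 T2 by linarith
      qed
    qed
  qed
qed



lemma card_nonzero: "card {u::'a::{field,finite}. u \<noteq> 0} = CARD('a) - 1"
proof -
  have "{u::'a. u \<noteq> 0} = UNIV - {0}" by auto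
  then show ?thesis by (simp add: card_Diff_singleton)
qed

lemma dh1: "l * a = (1::'a::field) \<Longrightarrow> b / a = l * b"
  by (metis div_by_1 divide_divide_eq_left mult.commute nonzero_mult_div_cancel_left one_neq_zero mult_zero_right times_divide_eq_left)

lemma dh2: "l * a = s \<Longrightarrow> l * b = t \<Longrightarrow> s \<noteq> 0 \<Longrightarrow> b / a = t / (s::'a::field)"
  by auto

lemma lower:
  fixes H :: "(('a::{field,finite})^3) set"
  assumes cov: "short_covering H" and small: "card H < CARD('a) - 1"
  shows "3 * (CARD('a) - 1) + 10 \<le> 6 * card H"
proof -
  define N where "N = {u::'a. u \<noteq> 0}"
  have cN: "card N = CARD('a) - 1" unfolding N_def by (rule card_nonzero)
  have cv: "\<exists>h\<in>H. \<exists>l. (l * h$1 = x$1 \<and> l * h$2 = x$2) \<or> (l * h$1 = x$1 \<and> l * h$3 = x$3) \<or> (l * h$2 = x$2 \<and> l * h$3 = x$3)" for x :: "'a^3"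
  proof -
    have "x \<in> (\<Union>h\<in>H. ext_ball h)" using cov unfolding short_covering_def by auto
    then show ?thesis by (auto simp: ext_ball_iff agree2_smult)
  qed
  define A12 where "A12 = {h\<in>H. h$1 \<noteq> 0 \<and> h$2 \<noteq> 0}"
  define A13 where "A13 = {h\<in>H. h$1 \<noteq> 0 \<and> h$3 \<noteq> 0}"
  define A23 where "A23 = {h\<in>H. h$2 \<noteq> 0 \<and> h$3 \<noteq> 0}"
  define R where "R = (\<lambda>h. h$2 / h$1) ` A12"
  define C where "C = (\<lambda>h. h$3 / h$1) ` A13"
  define D where "D = (\<lambda>h. h$3 / h$2) ` A23"
  define Z1 where "Z1 = {h\<in>H. h \<noteq> 0 \<and> h$1 = 0}"
  define Z2 where "Z2 = {h\<in>H. h \<noteq> 0 \<and> h$2 = 0}"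
  define Z3 where "Z3 = {h\<in>H. h \<noteq> 0 \<and> h$3 = 0}"
  have fin: "finite X" for X :: "'a set" by simp
  have finv: "finite X" for X :: "('a^3) set" by simp
  have RN: "R \<subseteq> N" "C \<subseteq> N" "D \<subseteq> N" by (auto simp: R_def C_def D_def N_def A12_def A13_def A23_def)
  have cR: "card R \<le> card A12" "card C \<le> card A13" "card D \<le> card A23"
    unfolding R_def C_def D_def by (auto intro: card_image_le)
  have cA: "card A12 \<le> card H" "card A13 \<le> card H" "card A23 \<le> card H"
    unfolding A12_def A13_def A23_def by (auto intro: card_mono)
  have W3: "s \<in> R \<or> t \<in> C \<or> t / s \<in> D" if st: "s \<noteq> 0" "t \<noteq> 0" for s t
  proof -
    obtain h l where h: "h \<in> H" and hl: "(l * h$1 = 1 \<and> l * h$2 = s) \<or> (l * h$1 = 1 \<and> l * h$3 = t) \<or> (l * h$2 = s \<and> l * h$3 = t)"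
      using cv[of "v3 1 s t"] unfolding v3_nth by blast
    show ?thesis
    proof (cases "l * h$1 = 1 \<and> l * h$2 = s")
      case True
      then have "h$1 \<noteq> 0" "h$2 \<noteq> 0" using st by auto
      then have "h \<in> A12" using h by (simp add: A12_def)
      moreover have "h$2/h$1 = s" using dh1[of l "h$1" "h$2"] True by simp
      ultimately have "s \<in> R" unfolding R_def by (intro image_eqI[where x=h]) auto
        then show ?thesis by simp
    next
      case F1: False
      show ?thesis
      proof (cases "l * h$1 = 1 \<and> l * h$3 = t")
        case True
        then have "h$1 \<noteq> 0" "h$3 \<noteq> 0" using st by auto
        then have "h \<in> A13" using h by (simp add: A13_def)
        moreover have "h$3/h$1 = t" using dh1[of l "h$1" "h$3"] True by simp
        ultimately have "t \<in> C" unfolding C_def by (intro image_eqI[where x=h]) auto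
        then show ?thesis by simp
      next
        case False
        then have e: "l * h$2 = s" "l * h$3 = t" using hl F1 by auto
        then have "h$2 \<noteq> 0" "h$3 \<noteq> 0" using st by auto
        then have "h \<in> A23" using h by (simp add: A23_def)
        moreover have "h$3/h$2 = t/s" using dh2[of l "h$2" s "h$3" t] e st by simp
        ultimately have "t/s \<in> D" unfolding D_def by (intro image_eqI[where x=h]) auto
        then show ?thesis by simp
      qed
    qed
  qed
  have nz: "h \<noteq> 0" if "h$i \<noteq> 0" for h :: "'a^3" and i using that by auto
  have Z3ne: "Z3 \<noteq> {}"
  proof
    assume Z: "Z3 = {}"
    have "N \<subseteq> R"
    proof
      fix u assume "u \<in> N" then have u: "u \<noteq> 0" by (simp add: N_def)
      obtain h l where h: "h \<in> H" and hl: "(l * h$1 = 1 \<and> l * h$2 = u) \<or> (l * h$1 = 1 \<and> l * h$3 = 0) \<or> (l * h$2 = u \<and> l * h$3 = 0)"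
        using cv[of "v3 1 u 0"] by auto
      show "u \<in> R"
      proof (cases "l * h$1 = 1 \<and> l * h$2 = u")
        case True
        then have "h \<in> A12" "h$2/h$1 = u" using h u dh1[of l "h$1" "h$2"] dh2[of l "h$1" _ "h$2"] by (auto simp: A12_def)
        then show ?thesis unfolding R_def by (intro image_eqI[where x=h]) auto
      next
        case False
        then have "h \<in> Z3" using hl h u nz[of h 1] nz[of h 2] by (auto simp: Z3_def)
        then show ?thesis using Z by auto
      qed
    qed
    then have "card N \<le> card R" by (intro card_mono) auto
    then show False using cR cA small cN by linarith
  qed
  have Z2ne: "Z2 \<noteq> {}"
  proof
    assume Z: "Z2 = {}"
    have "N \<subseteq> C"
    proof
      fix u assume "u \<in> N" then have u: "u \<noteq> 0" by (simp add: N_def)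
      obtain h l where h: "h \<in> H" and hl: "(l * h$1 = 1 \<and> l * h$2 = 0) \<or> (l * h$1 = 1 \<and> l * h$3 = u) \<or> (l * h$2 = 0 \<and> l * h$3 = u)"
        using cv[of "v3 1 0 u"] by auto
      show "u \<in> C"
      proof (cases "l * h$1 = 1 \<and> l * h$3 = u")
        case True
        then have "h \<in> A13" "h$3/h$1 = u" using h u dh1[of l "h$1" "h$3"] dh2[of l "h$1" _ "h$3"] by (auto simp: A13_def)
        then show ?thesis unfolding C_def by (intro image_eqI[where x=h]) auto
      next
        case False
        then have "h \<in> Z2" using hl h u nz[of h 1] nz[of h 3] by (auto simp: Z2_def)
        then show ?thesis using Z by auto
      qed
    qed
    then have "card N \<le> card C" by (intro card_mono) auto
    then show False using cR cA small cN by linarith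
  qed
  have Z1ne: "Z1 \<noteq> {}"
  proof
    assume Z: "Z1 = {}"
    have "N \<subseteq> D"
    proof
      fix u assume "u \<in> N" then have u: "u \<noteq> 0" by (simp add: N_def)
      obtain h l where h: "h \<in> H" and hl: "(l * h$1 = 0 \<and> l * h$2 = 1) \<or> (l * h$1 = 0 \<and> l * h$3 = u) \<or> (l * h$2 = 1 \<and> l * h$3 = u)"
        using cv[of "v3 0 1 u"] by auto
      show "u \<in> D"
      proof (cases "l * h$2 = 1 \<and> l * h$3 = u")
        case True
        then have "h \<in> A23" "h$3/h$2 = u" using h u dh1[of l "h$2" "h$3"] dh2[of l "h$2" _ "h$3"] by (auto simp: A23_def)
        then show ?thesis unfolding D_def by (intro image_eqI[where x=h]) auto
      next
        case False
        then have "h \<in> Z1" using hl h u nz[of h 2] nz[of h 3] by (auto simp: Z1_def)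
        then show ?thesis using Z by auto
      qed
    qed
    then have "card N \<le> card D" by (intro card_mono) auto
    then show False using cR cA small cN by linarith
  qed
  have Zint: "Z1 \<inter> Z2 \<inter> Z3 = {}"
    by (auto simp: Z1_def Z2_def Z3_def vec_eq_iff forall_3)
  have Z5: "5 \<le> card (Z1 \<union> Z2) + card (Z1 \<union> Z3) + card (Z2 \<union> Z3)"
    using sets5[OF finv finv finv Z1ne Z2ne Z3ne Zint] .
  have dj: "card A12 + card (Z1 \<union> Z2) \<le> card H" "card A13 + card (Z1 \<union> Z3) \<le> card H"
    "card A23 + card (Z2 \<union> Z3) \<le> card H"
  proof -
    have "card A12 + card (Z1 \<union> Z2) = card (A12 \<union> (Z1 \<union> Z2))"
      by (rule card_Un_disjoint[symmetric]) (auto simp: A12_def Z1_def Z2_def)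
    also have "\<dots> \<le> card H" by (rule card_mono) (auto simp: A12_def Z1_def Z2_def)
    finally show "card A12 + card (Z1 \<union> Z2) \<le> card H" .
    have "card A13 + card (Z1 \<union> Z3) = card (A13 \<union> (Z1 \<union> Z3))"
      by (rule card_Un_disjoint[symmetric]) (auto simp: A13_def Z1_def Z3_def)
    also have "\<dots> \<le> card H" by (rule card_mono) (auto simp: A13_def Z1_def Z3_def)
    finally show "card A13 + card (Z1 \<union> Z3) \<le> card H" .
    have "card A23 + card (Z2 \<union> Z3) = card (A23 \<union> (Z2 \<union> Z3))"
      by (rule card_Un_disjoint[symmetric]) (auto simp: A23_def Z2_def Z3_def)
    also have "\<dots> \<le> card H" by (rule card_mono) (auto simp: A23_def Z2_def Z3_def)
    finally show "card A23 + card (Z2 \<union> Z3) \<le> card H" .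
  qed
  have cRN: "card R < card N" "card C < card N" "card D < card N" using cR cA small cN by linarith+
  have "\<not> N \<subseteq> R" using cRN(1) card_mono[OF fin, of N R] by linarith
  then obtain s0 where s0: "s0 \<in> N" "s0 \<notin> R" by blast
  have "\<not> N \<subseteq> C" using cRN(2) card_mono[OF fin, of N C] by linarith
  then obtain t0 where t0: "t0 \<in> N" "t0 \<notin> C" by blast
  have "\<not> N \<subseteq> D" using cRN(3) card_mono[OF fin, of N D] by linarith
  then obtain w0 where w0: "w0 \<in> N" "w0 \<notin> D" by blast
  have i1: "card N \<le> card C + card D"
  proof -
    have "(\<lambda>w. s0 * w) ` (N - D) \<subseteq> C"
    proof
      fix t assume "t \<in> (\<lambda>w. s0 * w) ` (N - D)"
      then obtain w where w: "w \<in> N" "w \<notin> D" "t = s0 * w" by auto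
      have "t \<noteq> 0" "s0 \<noteq> 0" "t / s0 = w" using w s0 by (auto simp: N_def)
      then show "t \<in> C" using W3[of s0 t] s0 w by auto
    qed
    moreover have "inj_on (\<lambda>w. s0 * w) (N - D)" using s0 by (auto simp: inj_on_def N_def)
    ultimately have "card (N - D) \<le> card C" by (metis card_image card_mono fin)
    moreover have "card (N - D) = card N - card D" using RN(3) by (simp add: card_Diff_subset)
    ultimately show ?thesis by linarith
  qed
  have i2: "card N \<le> card R + card D"
  proof -
    have "(\<lambda>w. t0 / w) ` (N - D) \<subseteq> R"
    proof
      fix s assume "s \<in> (\<lambda>w. t0 / w) ` (N - D)"
      then obtain w where w: "w \<in> N" "w \<notin> D" "s = t0 / w" by auto
      have "s \<noteq> 0" "t0 \<noteq> 0" "t0 / s = w" using w t0 by (auto simp: N_def)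
      then show "s \<in> R" using W3[of s t0] t0 w by auto
    qed
    moreover have "inj_on (\<lambda>w. t0 / w) (N - D)" using t0 by (auto simp: inj_on_def N_def field_simps)
    ultimately have "card (N - D) \<le> card R" by (metis card_image card_mono fin)
    moreover have "card (N - D) = card N - card D" using RN(3) by (simp add: card_Diff_subset)
    ultimately show ?thesis by linarith
  qed
  have i3: "card N \<le> card R + card C"
  proof -
    have "(\<lambda>s. w0 * s) ` (N - R) \<subseteq> C"
    proof
      fix t assume "t \<in> (\<lambda>s. w0 * s) ` (N - R)"
      then obtain s where s: "s \<in> N" "s \<notin> R" "t = w0 * s" by auto
      have "t \<noteq> 0" "s \<noteq> 0" "t / s = w0" using s w0 by (auto simp: N_def)
      then show "t \<in> C" using W3[of s t] s w0 by auto
    qed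
    moreover have "inj_on (\<lambda>s. w0 * s) (N - R)" using w0 by (auto simp: inj_on_def N_def)
    ultimately have "card (N - R) \<le> card C" by (metis card_image card_mono fin)
    moreover have "card (N - R) = card N - card R" using RN(1) by (simp add: card_Diff_subset)
    ultimately show ?thesis by linarith
  qed
  show ?thesis using i1 i2 i3 cR dj Z5 cN by linarith
qed



lemma fermat:
  fixes y :: "'a::{field,finite}"
  assumes "y \<noteq> 0"
  shows "y ^ (CARD('a) - 1) = 1"
proof -
  define N where "N = {u::'a. u \<noteq> 0}"
  have cN: "card N = CARD('a) - 1" unfolding N_def by (rule card_nonzero)
  have fin: "finite N" by simp
  have inj: "inj_on ((*) y) N" using assms by (auto simp: inj_on_def)
  have img: "(*) y ` N = N"
  proof
    show "(*) y ` N \<subseteq> N" using assms by (auto simp: N_def)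
    show "N \<subseteq> (*) y ` N"
    proof
      fix z assume z: "z \<in> N"
      have "z = y * (z / y)" using assms by simp
      moreover have "z / y \<in> N" using z assms by (auto simp: N_def)
      ultimately show "z \<in> (*) y ` N" by blast
    qed
  qed
  have "prod id N = prod id ((*) y ` N)" using img by simp
  also have "\<dots> = prod ((*) y) N" using prod.reindex[OF inj, of id] by simp
  also have "\<dots> = y ^ card N * prod id N" by (simp add: prod.distrib)
  finally have e: "prod id N = y ^ card N * prod id N" .
  have "prod id N \<noteq> 0" using fin by (simp add: N_def)
  then have "y ^ card N = 1" using e by (metis mult_cancel_right2)
  then show ?thesis using cN by simp
qed

lemma pow_mod:
  fixes g :: "'a::monoid_mult"
  assumes "g ^ n = 1"
  shows "g ^ m = g ^ (m mod n)"
proof -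
  have "g ^ m = g ^ (n * (m div n) + m mod n)" by simp
  also have "\<dots> = (g ^ n) ^ (m div n) * g ^ (m mod n)" by (simp only: power_add power_mult)
  finally show ?thesis using assms by simp
qed

lemma pow_red:
  fixes g :: "'a::comm_monoid_mult"
  assumes "g ^ n = 1" "g ^ d = 1" "d * e = n * k + r"
  shows "g ^ r = 1"
proof -
  have "g ^ (d * e) = 1" using assms(2) by (simp add: power_mult)
  moreover have "g ^ (d * e) = g ^ r" using assms(1,3) by (simp add: power_add power_mult)
  ultimately show ?thesis by simp
qed

lemma gen_powers:
  fixes g :: "'a::{field,finite}"
  assumes gn: "g ^ n = 1" and nd: "\<And>d. 0 < d \<Longrightarrow> d < n \<Longrightarrow> g ^ d \<noteq> 1"
    and n: "n = CARD('a) - 1" and n0: "0 < n"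
  shows "\<forall>y. y \<noteq> 0 \<longrightarrow> (\<exists>i<n. y = g ^ i)"
    and "\<And>i j. i < n \<Longrightarrow> j < n \<Longrightarrow> g ^ i = g ^ j \<Longrightarrow> i = j"
    and "\<And>i. g ^ i \<noteq> 0"
proof -
  have g0: "g \<noteq> 0"
  proof
    assume "g = 0" then have "g ^ n = 0" using n0 by simp
    then show False using gn by simp
  qed
  show gnz: "\<And>i. g ^ i \<noteq> 0" using g0 by simp
  have injl: "i = j" if "i < n" "j < n" "g ^ i = g ^ j" "i \<le> j" for i j
  proof (rule ccontr)
    assume "i \<noteq> j"
    then have "0 < j - i" "j - i < n" using that by auto
    moreover have "g ^ j = g ^ i * g ^ (j - i)" using that(4) by (simp add: power_add[symmetric])
    then have "g ^ i * g ^ (j - i) = g ^ i * 1" using that(3) by simp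
    then have "g ^ (j - i) = 1" using gnz[of i] by (subst (asm) mult_left_cancel) auto
    ultimately show False using nd by blast
  qed
  show inj: "\<And>i j. i < n \<Longrightarrow> j < n \<Longrightarrow> g ^ i = g ^ j \<Longrightarrow> i = j"
    using injl by (metis nat_le_linear)
  have "inj_on (\<lambda>i. g ^ i) {..<n}" using inj by (auto simp: inj_on_def)
  then have c: "card ((\<lambda>i. g ^ i) ` {..<n}) = card {u::'a. u \<noteq> 0}"
    using card_nonzero[where 'a='a] n by (simp add: card_image)
  have "(\<lambda>i. g ^ i) ` {..<n} \<subseteq> {u. u \<noteq> 0}" proof (rule subsetI) fix u assume "u \<in> (\<lambda>i. g ^ i) ` {..<n}" then obtain i where "u = g ^ i" by blast then show "u \<in> {u. u \<noteq> 0}" using gnz[of i] by simp qed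
  then have "(\<lambda>i. g ^ i) ` {..<n} = {u. u \<noteq> 0}" using c by (intro card_subset_eq) auto
  then show "\<forall>y. y \<noteq> 0 \<longrightarrow> (\<exists>i<n. y = g ^ i)" by (auto simp: set_eq_iff image_iff)
qed



lemma cover_crit:
  fixes H :: "(('a::{field,finite})^3) set" and g :: 'a and n :: nat
  assumes gn: "g ^ n = 1" and gen: "\<forall>y. y \<noteq> 0 \<longrightarrow> (\<exists>i<n. y = g ^ i)"
    and z3: "\<exists>h\<in>H. h \<noteq> 0 \<and> h$3 = 0" and z2: "\<exists>h\<in>H. h \<noteq> 0 \<and> h$2 = 0"
    and z1: "\<exists>h\<in>H. h \<noteq> 0 \<and> h$1 = 0"
    and rows: "\<forall>a\<in>Rw. \<exists>h\<in>H. h$1 \<noteq> 0 \<and> h$2 = h$1 * g ^ a"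
    and cols: "\<forall>b\<in>Cw. \<exists>h\<in>H. h$1 \<noteq> 0 \<and> h$3 = h$1 * g ^ b"
    and diags: "\<forall>c\<in>Dw. \<exists>h\<in>H. h$2 \<noteq> 0 \<and> h$3 = h$2 * g ^ c"
    and grid: "\<forall>i<n. \<forall>j<n. i \<in> Rw \<or> j \<in> Cw \<or> (\<exists>c\<in>Dw. (i + c) mod n = j)"
  shows "short_covering H"
proof -
  have nz: "h$1 \<noteq> 0 \<or> h$2 \<noteq> 0 \<or> h$3 \<noteq> 0" if "h \<noteq> 0" for h :: "'a^3"
    using that by (auto simp: vec_eq_iff forall_3)
  have key: "\<exists>h\<in>H. \<exists>l. (l * h$1 = x$1 \<and> l * h$2 = x$2) \<or> (l * h$1 = x$1 \<and> l * h$3 = x$3) \<or> (l * h$2 = x$2 \<and> l * h$3 = x$3)" for x :: "'a^3"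
  proof -
    obtain h0 where h0: "h0 \<in> H" using z3 by auto
    consider "x$1 = 0 \<and> x$2 = 0" | "x$1 = 0 \<and> x$3 = 0" | "x$2 = 0 \<and> x$3 = 0"
      | "x$3 = 0 \<and> x$1 \<noteq> 0 \<and> x$2 \<noteq> 0" | "x$2 = 0 \<and> x$1 \<noteq> 0 \<and> x$3 \<noteq> 0"
      | "x$1 = 0 \<and> x$2 \<noteq> 0 \<and> x$3 \<noteq> 0" | "x$1 \<noteq> 0 \<and> x$2 \<noteq> 0 \<and> x$3 \<noteq> 0" by blast
    then show ?thesis
    proof cases
      case 1 then have "0 * h0$1 = x$1 \<and> 0 * h0$2 = x$2" by simp
      then show ?thesis using h0 by blast
    next
      case 2 then have "0 * h0$1 = x$1 \<and> 0 * h0$3 = x$3" by simp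
      then show ?thesis using h0 by blast
    next
      case 3 then have "0 * h0$2 = x$2 \<and> 0 * h0$3 = x$3" by simp
      then show ?thesis using h0 by blast
    next
      case 4
      obtain h where h: "h \<in> H" "h \<noteq> 0" "h$3 = 0" using z3 by auto
      show ?thesis
      proof (cases "h$1 = 0")
        case False
        then have "(x$1 / h$1) * h$1 = x$1 \<and> (x$1 / h$1) * h$3 = x$3" using 4 h by simp
        then show ?thesis using h by blast
      next
        case True
        then have "h$2 \<noteq> 0" using nz[OF h(2)] h by simp
        then have "(x$2 / h$2) * h$2 = x$2 \<and> (x$2 / h$2) * h$3 = x$3" using 4 h by simp
        then show ?thesis using h by blast
      qed
    next
      case 5
      obtain h where h: "h \<in> H" "h \<noteq> 0" "h$2 = 0" using z2 by auto
      show ?thesis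
      proof (cases "h$1 = 0")
        case False
        then have "(x$1 / h$1) * h$1 = x$1 \<and> (x$1 / h$1) * h$2 = x$2" using 5 h by simp
        then show ?thesis using h by blast
      next
        case True
        then have "h$3 \<noteq> 0" using nz[OF h(2)] h by simp
        then have "(x$3 / h$3) * h$2 = x$2 \<and> (x$3 / h$3) * h$3 = x$3" using 5 h by simp
        then show ?thesis using h by blast
      qed
    next
      case 6
      obtain h where h: "h \<in> H" "h \<noteq> 0" "h$1 = 0" using z1 by auto
      show ?thesis
      proof (cases "h$2 = 0")
        case False
        then have "(x$2 / h$2) * h$1 = x$1 \<and> (x$2 / h$2) * h$2 = x$2" using 6 h by simp
        then show ?thesis using h by blast
      next
        case True
        then have "h$3 \<noteq> 0" using nz[OF h(2)] h by simp
        then have "(x$3 / h$3) * h$1 = x$1 \<and> (x$3 / h$3) * h$3 = x$3" using 6 h by simp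
        then show ?thesis using h by blast
      qed
    next
      case 7
      have "x$2 / x$1 \<noteq> 0" "x$3 / x$1 \<noteq> 0" using 7 by auto
      then obtain i j where i: "i < n" "x$2 / x$1 = g ^ i" and j: "j < n" "x$3 / x$1 = g ^ j" using gen by blast
      have x2: "x$2 = x$1 * g ^ i" using i 7 by (simp add: field_simps)
      have x3: "x$3 = x$1 * g ^ j" using j 7 by (simp add: field_simps)
      consider "i \<in> Rw" | "j \<in> Cw" | c where "c \<in> Dw" "(i + c) mod n = j" using grid i j by blast
      then show ?thesis
      proof cases
        case 1
        then obtain h where h: "h \<in> H" "h$1 \<noteq> 0" "h$2 = h$1 * g ^ i" using rows by blast
        have "(x$1 / h$1) * h$1 = x$1 \<and> (x$1 / h$1) * h$2 = x$2" using h x2 by simp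
        then show ?thesis using h by blast
      next
        case 2
        then obtain h where h: "h \<in> H" "h$1 \<noteq> 0" "h$3 = h$1 * g ^ j" using cols by blast
        have "(x$1 / h$1) * h$1 = x$1 \<and> (x$1 / h$1) * h$3 = x$3" using h x3 by simp
        then show ?thesis using h by blast
      next
        case (3 c)
        then obtain h where h: "h \<in> H" "h$2 \<noteq> 0" "h$3 = h$2 * g ^ c" using diags by blast
        have "g ^ j = g ^ (i + c)" using pow_mod[OF gn, of "i + c"] 3 by simp
        then have gj: "g ^ j = g ^ i * g ^ c" by (simp add: power_add)
        have "(x$2 / h$2) * h$2 = x$2 \<and> (x$2 / h$2) * h$3 = x$3" using h x2 x3 gj by simp
        then show ?thesis using h by blast
      qed
    qed
  qed
  have "x \<in> (\<Union>h\<in>H. ext_ball h)" for x :: "'a^3"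
  proof -
    obtain h l where h: "h \<in> H" and hl: "(l * h$1 = x$1 \<and> l * h$2 = x$2) \<or> (l * h$1 = x$1 \<and> l * h$3 = x$3) \<or> (l * h$2 = x$2 \<and> l * h$3 = x$3)"
      using key[of x] by blast
    have "x \<in> ext_ball h" unfolding ext_ball_iff agree2_smult using hl by blast
    then show ?thesis using h by blast
  qed
  then show ?thesis unfolding short_covering_def by blast
qed



lemma card4: "card {a,b,c,d} \<le> 4"
  using card_length[of "[a,b,c,d]"] by simp

lemma cube1: "(y::'a::field) ^ 3 = 1 \<Longrightarrow> y = 1 \<or> y^2 + y + 1 = 0"
proof -
  assume "y ^ 3 = 1"
  moreover have "(y - 1) * (y^2 + y + 1) = y ^ 3 - 1" by (simp add: algebra_simps power2_eq_square power3_eq_cube)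
  ultimately have "(y - 1) * (y^2 + y + 1) = 0" by simp
  then show ?thesis by simp
qed

lemma quad: "(y::'a::field)^2 + y + 1 = 0 \<Longrightarrow> a^2 + a + 1 = 0 \<Longrightarrow> y = a \<or> y = -1 - a"
proof -
  assume "y^2 + y + 1 = 0" "a^2 + a + 1 = 0"
  moreover have "(y - a) * (y + a + 1) = (y^2 + y + 1) - (a^2 + a + 1)" by (simp add: algebra_simps power2_eq_square)
  ultimately have "(y - a) * (y + a + 1) = 0" by simp
  then have "y - a = 0 \<or> y + a + 1 = 0" by simp
  moreover have "y + a + 1 = 0 \<Longrightarrow> y = -1 - a"
  proof -
    assume h: "y + a + 1 = 0"
    have "y = (y + a + 1) - a - 1" by simp
    also have "\<dots> = -1 - a" using h by simp
    finally show ?thesis .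
  qed
  ultimately show ?thesis by auto
qed

lemma sqm1: "(y::'a::field)^2 = -1 \<Longrightarrow> a^2 = -1 \<Longrightarrow> y = a \<or> y = - a"
proof -
  assume "y^2 = -1" "a^2 = -1"
  moreover have "(y - a) * (y + a) = y^2 - a^2" by (simp add: algebra_simps power2_eq_square)
  ultimately have "(y - a) * (y + a) = 0" by simp
  then show ?thesis by (auto simp: eq_neg_iff_add_eq_0)
qed

lemma exist7:
  assumes "CARD('a::{field,finite}) = 7"
  shows "\<exists>g::'a. g \<noteq> 0 \<and> g^2 \<noteq> 1 \<and> g^3 \<noteq> 1"
proof (rule ccontr)
  assume "\<not> ?thesis"
  then have all: "\<And>g::'a. g \<noteq> 0 \<Longrightarrow> g^2 = 1 \<or> g^3 = 1" by blast
  obtain a :: 'a where a: "\<And>y. y^2 + y + 1 = 0 \<Longrightarrow> y = a \<or> y = -1 - a"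
  proof (cases "\<exists>a::'a. a^2 + a + 1 = 0")
    case True then obtain a :: 'a where "a^2 + a + 1 = 0" by blast
    then show ?thesis using that quad by blast
  next
    case False then show ?thesis using that by blast
  qed
  have "{u::'a. u \<noteq> 0} \<subseteq> {1, -1, a, -1 - a}"
  proof
    fix y :: 'a assume "y \<in> {u. u \<noteq> 0}"
    then have "y^2 = 1 \<or> y^3 = 1" using all by blast
    then show "y \<in> {1, -1, a, -1 - a}" using power2_eq_1_iff[of y] cube1[of y] a[of y] by auto
  qed
  then have "card {u::'a. u \<noteq> 0} \<le> 4" using card4 card_mono[of "{1, -1, a, -1 - a}"] by (meson finite.emptyI finite.insertI order_trans)
  then show False using card_nonzero[where 'a='a] assms by simp
qed

lemma exist9:
  assumes "CARD('a::{field,finite}) = 9"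
  shows "\<exists>g::'a. g \<noteq> 0 \<and> g^4 \<noteq> 1"
proof (rule ccontr)
  assume "\<not> ?thesis"
  then have all: "\<And>g::'a. g \<noteq> 0 \<Longrightarrow> g^4 = 1" by blast
  obtain a :: 'a where a: "\<And>y. y^2 = -1 \<Longrightarrow> y = a \<or> y = - a"
  proof (cases "\<exists>a::'a. a^2 = -1")
    case True then obtain a :: 'a where "a^2 = -1" by blast
    then show ?thesis using that sqm1 by blast
  next
    case False then show ?thesis using that by blast
  qed
  have "{u::'a. u \<noteq> 0} \<subseteq> {1, -1, a, - a}"
  proof
    fix y :: 'a assume "y \<in> {u. u \<noteq> 0}"
    then have "(y^2)^2 = 1" using all by (simp add: power_mult[symmetric])
    then have "y^2 = 1 \<or> y^2 = -1" using power2_eq_1_iff[of "y^2"] by simp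
    then show "y \<in> {1, -1, a, - a}" using power2_eq_1_iff[of y] a[of y] by auto
  qed
  then have "card {u::'a. u \<noteq> 0} \<le> 4" using card4 card_mono[of "{1, -1, a, - a}"] by (meson finite.emptyI finite.insertI order_trans)
  then show False using card_nonzero[where 'a='a] assms by simp
qed

lemma exist8:
  assumes "CARD('a::{field,finite}) = 8"
  shows "\<exists>g::'a. g \<noteq> 0 \<and> g \<noteq> 1"
proof (rule ccontr)
  assume "\<not> ?thesis"
  then have "(UNIV::'a set) \<subseteq> {0, 1}" by blast
  then have "CARD('a) \<le> card {0::'a, 1}" by (intro card_mono) auto
  also have "\<dots> \<le> 2" using card_length[of "[0::'a,1]"] by simp
  finally show False using assms by simp
qed



lemma lt6: "(i::nat) < 6 \<longleftrightarrow> i \<in> {0,1,2,3,4,5}" by auto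
lemma lt7: "(i::nat) < 7 \<longleftrightarrow> i \<in> {0,1,2,3,4,5,6}" by auto
lemma lt8: "(i::nat) < 8 \<longleftrightarrow> i \<in> {0,1,2,3,4,5,6,7}" by auto

lemma grid7: "\<forall>i<(6::nat). \<forall>j<(6::nat). i \<in> {0,2,4} \<or> j \<in> {0,2,4} \<or> (\<exists>c\<in>{0,2,4::nat}. (i + c) mod 6 = j)"
  unfolding lt6 by simp

lemma grid8: "\<forall>i<(7::nat). \<forall>j<(7::nat). i \<in> {0,1,2,6,4} \<or> j \<in> {0,2,5,4} \<or> (\<exists>c\<in>{0,1,3,5::nat}. (i + c) mod 7 = j)"
  unfolding lt7 by simp

lemma grid9: "\<forall>i<(8::nat). \<forall>j<(8::nat). i \<in> {0,2,6,4} \<or> j \<in> {0,2,6,4} \<or> (\<exists>c\<in>{0,2,4,6::nat}. (i + c) mod 8 = j)"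
  unfolding lt8 by simp



lemma v3_nz: "a \<noteq> 0 \<Longrightarrow> v3 a b c \<noteq> 0" "c \<noteq> 0 \<Longrightarrow> v3 a b c \<noteq> 0"
  by (metis v3_nth(1) zero_index, metis v3_nth(3) zero_index)

lemma c7:
  assumes "CARD('a::{field,finite}) = 7"
  shows "c_cov TYPE('a) = 5"
proof -
  obtain g :: 'a where g: "g \<noteq> 0" "g^2 \<noteq> 1" "g^3 \<noteq> 1" using exist7[OF assms] by blast
  have g6: "g^6 = 1" using fermat[OF g(1)] assms by simp
  have nd: "g^d \<noteq> 1" if d: "0 < d" "d < 6" for d
  proof
    assume gd: "g^d = 1"
    have "d = 1 \<or> d = 2 \<or> d = 3 \<or> d = 4 \<or> d = 5" using d by auto
    then show False
    proof (elim disjE)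
      assume "d = 1" then show False using gd g by simp
    next
      assume "d = 2" then show False using gd g by simp
    next
      assume "d = 3" then show False using gd g by simp
    next
      assume "d = 4" then show False using pow_red[OF g6, of 4 2 1 2] gd g by simp
    next
      assume "d = 5" then show False using pow_red[OF g6, of 5 10 8 2] gd g by simp
    qed
  qed
  have n: "6 = CARD('a) - 1" using assms by simp
  note gp = gen_powers[OF g6 nd n]
  have gen: "\<forall>y. y \<noteq> 0 \<longrightarrow> (\<exists>i<6. y = g ^ i)" using gp(1) by simp
  have g24: "g^2 \<noteq> g^4" using gp(2)[of 2 4] by auto
  have g4: "g^4 \<noteq> 1" using nd[of 4] by simp
  have gnz: "g^2 \<noteq> 0" "g^4 \<noteq> 0" using gp(3) by auto
  have m1: "g^2 * g^2 = g^4" by (simp flip: power_add)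
  have m2: "g^4 * g^4 = g^2"
  proof -
    have "g^4 * g^4 = g^6 * g^2" by (simp flip: power_add)
    then show ?thesis using g6 by simp
  qed
  define H where "H = {v3 1 1 1, v3 1 (g^2) (g^4), v3 1 (g^4) (g^2), v3 1 1 0, v3 0 0 (1::'a)}"
  have cov: "short_covering H"
  proof (rule cover_crit[where g=g and n=6 and Rw="{0,2,4}" and Cw="{0,2,4}" and Dw="{0,2,4}"])
    show "g ^ 6 = 1" by (rule g6)
    show "\<forall>y. y \<noteq> 0 \<longrightarrow> (\<exists>i<6. y = g ^ i)" by (rule gen)
    show "\<exists>h\<in>H. h \<noteq> 0 \<and> h $ 3 = 0" unfolding H_def by (simp add: v3_nz)
    show "\<exists>h\<in>H. h \<noteq> 0 \<and> h $ 2 = 0" unfolding H_def by (simp add: v3_nz)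
    show "\<exists>h\<in>H. h \<noteq> 0 \<and> h $ 1 = 0" unfolding H_def by (simp add: v3_nz)
    show "\<forall>a\<in>{0, 2, 4}. \<exists>h\<in>H. h $ 1 \<noteq> 0 \<and> h $ 2 = h $ 1 * g ^ a" unfolding H_def by simp
    show "\<forall>b\<in>{0, 2, 4}. \<exists>h\<in>H. h $ 1 \<noteq> 0 \<and> h $ 3 = h $ 1 * g ^ b" unfolding H_def by simp
    show "\<forall>c\<in>{0, 2, 4}. \<exists>h\<in>H. h $ 2 \<noteq> 0 \<and> h $ 3 = h $ 2 * g ^ c" unfolding H_def using m1 m2 gnz by simp
    show "\<forall>i<(6::nat). \<forall>j<(6::nat). i \<in> {0, 2, 4} \<or> j \<in> {0, 2, 4} \<or> (\<exists>c\<in>{0, 2, 4::nat}. (i + c) mod 6 = j)" by (rule grid7)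
  qed
  have card: "card H = 5" unfolding H_def using g(2) g4 g24 gnz by (simp add: v3_eq_iff card_insert_if)
  show ?thesis unfolding c_cov_def
  proof (rule Least_equality)
    show "\<exists>H :: ('a^3) set. short_covering H \<and> card H = 5" using cov card by blast
  next
    fix m assume "\<exists>H :: ('a^3) set. short_covering H \<and> card H = m"
    then obtain H' :: "('a^3) set" where H': "short_covering H'" "card H' = m" by blast
    show "5 \<le> m"
    proof (rule ccontr)
      assume "\<not> 5 \<le> m"
      then have "card H' < CARD('a) - 1" using H' assms by simp
      then have "3 * (CARD('a) - 1) + 10 \<le> 6 * card H'" using lower[OF H'(1)] by blast
      then show False using H' assms \<open>\<not> 5 \<le> m\<close> by simp
    qed
  qed
qed



lemma c8:
  assumes "CARD('a::{field,finite}) = 8"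
  shows "c_cov TYPE('a) = 6"
proof -
  obtain g :: 'a where g: "g \<noteq> 0" "g \<noteq> 1" using exist8[OF assms] by blast
  have g7: "g^7 = 1" using fermat[OF g(1)] assms by simp
  have nd: "g^d \<noteq> 1" if d: "0 < d" "d < 7" for d
  proof
    assume gd: "g^d = 1"
    have "d = 1 \<or> d = 2 \<or> d = 3 \<or> d = 4 \<or> d = 5 \<or> d = 6" using d by auto
    then show False
    proof (elim disjE)
      assume "d = 1" then show False using gd g by simp
    next
      assume "d = 2" then show False using pow_red[OF g7, of 2 4 1 1] gd g by simp
    next
      assume "d = 3" then show False using pow_red[OF g7, of 3 5 2 1] gd g by simp
    next
      assume "d = 4" then show False using pow_red[OF g7, of 4 2 1 1] gd g by simp
    next
      assume "d = 5" then show False using pow_red[OF g7, of 5 3 2 1] gd g by simp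
    next
      assume "d = 6" then show False using pow_red[OF g7, of 6 6 5 1] gd g by simp
    qed
  qed
  have n: "7 = CARD('a) - 1" using assms by simp
  note gp = gen_powers[OF g7 nd n]
  have gen: "\<forall>y. y \<noteq> 0 \<longrightarrow> (\<exists>i<7. y = g ^ i)" using gp(1) by simp
  have ds: "1 \<noteq> g" "g \<noteq> 1" "1 \<noteq> g^2" "g^2 \<noteq> 1" "1 \<noteq> g^4" "g^4 \<noteq> 1" "1 \<noteq> g^6" "g^6 \<noteq> 1" "g \<noteq> g^2" "g^2 \<noteq> g" "g \<noteq> g^4" "g^4 \<noteq> g" "g \<noteq> g^6" "g^6 \<noteq> g" "g^2 \<noteq> g^4" "g^4 \<noteq> g^2" "g^2 \<noteq> g^6" "g^6 \<noteq> g^2" "g^4 \<noteq> g^6" "g^6 \<noteq> g^4"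
    using gp(2)[of 0 1] gp(2)[of 0 2] gp(2)[of 0 4] gp(2)[of 0 6] gp(2)[of 1 2] gp(2)[of 1 4] gp(2)[of 1 6] gp(2)[of 2 4] gp(2)[of 2 6] gp(2)[of 4 6] by auto
  have gnz: "g^2 \<noteq> 0" "g^4 \<noteq> 0" "g^5 \<noteq> 0" "g^6 \<noteq> 0" using gp(3) by auto
  have m1: "g * g = g^2" by (simp add: power2_eq_square)
  have m2: "g^2 * g^3 = g^5" by (simp flip: power_add)
  have m3: "g^6 * g^5 = g^4"
  proof -
    have "g^6 * g^5 = g^7 * g^4" by (simp flip: power_add)
    then show ?thesis using g7 by simp
  qed
  define H where "H = {v3 1 1 1, v3 1 g (g^2), v3 1 (g^2) (g^5), v3 1 (g^6) (g^4), v3 1 (g^4) 0, v3 0 0 (1::'a)}"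
  have cov: "short_covering H"
  proof (rule cover_crit[where g=g and n=7 and Rw="{0,1,2,6,4}" and Cw="{0,2,5,4}" and Dw="{0,1,3,5}"])
    show "g ^ 7 = 1" by (rule g7)
    show "\<forall>y. y \<noteq> 0 \<longrightarrow> (\<exists>i<7. y = g ^ i)" by (rule gen)
    show "\<exists>h\<in>H. h \<noteq> 0 \<and> h $ 3 = 0" unfolding H_def by (simp add: v3_nz)
    show "\<exists>h\<in>H. h \<noteq> 0 \<and> h $ 2 = 0" unfolding H_def by (simp add: v3_nz)
    show "\<exists>h\<in>H. h \<noteq> 0 \<and> h $ 1 = 0" unfolding H_def by (simp add: v3_nz)
    show "\<forall>a\<in>{0,1,2,6,4::nat}. \<exists>h\<in>H. h $ 1 \<noteq> 0 \<and> h $ 2 = h $ 1 * g ^ a" unfolding H_def by simp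
    show "\<forall>b\<in>{0,2,5,4::nat}. \<exists>h\<in>H. h $ 1 \<noteq> 0 \<and> h $ 3 = h $ 1 * g ^ b" unfolding H_def by simp
    show "\<forall>c\<in>{0,1,3,5::nat}. \<exists>h\<in>H. h $ 2 \<noteq> 0 \<and> h $ 3 = h $ 2 * g ^ c" unfolding H_def using m1 m2 m3 gnz g by simp
    show "\<forall>i<(7::nat). \<forall>j<(7::nat). i \<in> {0,1,2,6,4} \<or> j \<in> {0,2,5,4} \<or> (\<exists>c\<in>{0,1,3,5::nat}. (i + c) mod 7 = j)" by (rule grid8)
  qed
  have card: "card H = 6" unfolding H_def using ds gnz g by (simp add: v3_eq_iff card_insert_if)
  show ?thesis unfolding c_cov_def
  proof (rule Least_equality)
    show "\<exists>H :: ('a^3) set. short_covering H \<and> card H = 6" using cov card by blast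
  next
    fix m assume "\<exists>H :: ('a^3) set. short_covering H \<and> card H = m"
    then obtain H' :: "('a^3) set" where H': "short_covering H'" "card H' = m" by blast
    show "6 \<le> m"
    proof (rule ccontr)
      assume "\<not> 6 \<le> m"
      then have "card H' < CARD('a) - 1" using H' assms by simp
      then have "3 * (CARD('a) - 1) + 10 \<le> 6 * card H'" using lower[OF H'(1)] by blast
      then show False using H' assms \<open>\<not> 6 \<le> m\<close> by simp
    qed
  qed
qed

lemma c9:
  assumes "CARD('a::{field,finite}) = 9"
  shows "c_cov TYPE('a) = 6"
proof -
  obtain g :: 'a where g: "g \<noteq> 0" "g^4 \<noteq> 1" using exist9[OF assms] by blast
  have g8: "g^8 = 1" using fermat[OF g(1)] assms by simp
  have nd: "g^d \<noteq> 1" if d: "0 < d" "d < 8" for d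
  proof
    assume gd: "g^d = 1"
    have "d = 1 \<or> d = 2 \<or> d = 3 \<or> d = 4 \<or> d = 5 \<or> d = 6 \<or> d = 7" using d by auto
    then show False
    proof (elim disjE)
      assume "d = 1" then show False using pow_red[OF g8, of 1 4 0 4] gd g by simp
    next
      assume "d = 2" then show False using pow_red[OF g8, of 2 2 0 4] gd g by simp
    next
      assume "d = 3" then show False using pow_red[OF g8, of 3 4 1 4] gd g by simp
    next
      assume "d = 4" then show False using gd g by simp
    next
      assume "d = 5" then show False using pow_red[OF g8, of 5 4 2 4] gd g by simp
    next
      assume "d = 6" then show False using pow_red[OF g8, of 6 2 1 4] gd g by simp
    next
      assume "d = 7" then show False using pow_red[OF g8, of 7 4 3 4] gd g by simp
    qed
  qed
  have n: "8 = CARD('a) - 1" using assms by simp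
  note gp = gen_powers[OF g8 nd n]
  have gen: "\<forall>y. y \<noteq> 0 \<longrightarrow> (\<exists>i<8. y = g ^ i)" using gp(1) by simp
  have ds: "1 \<noteq> g" "g \<noteq> 1" "1 \<noteq> g^2" "g^2 \<noteq> 1" "1 \<noteq> g^4" "g^4 \<noteq> 1" "1 \<noteq> g^6" "g^6 \<noteq> 1" "g \<noteq> g^2" "g^2 \<noteq> g" "g \<noteq> g^4" "g^4 \<noteq> g" "g \<noteq> g^6" "g^6 \<noteq> g" "g^2 \<noteq> g^4" "g^4 \<noteq> g^2" "g^2 \<noteq> g^6" "g^6 \<noteq> g^2" "g^4 \<noteq> g^6" "g^6 \<noteq> g^4"
    using gp(2)[of 0 1] gp(2)[of 0 2] gp(2)[of 0 4] gp(2)[of 0 6] gp(2)[of 1 2] gp(2)[of 1 4] gp(2)[of 1 6] gp(2)[of 2 4] gp(2)[of 2 6] gp(2)[of 4 6] by auto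
  have gnz: "g^2 \<noteq> 0" "g^4 \<noteq> 0" "g^6 \<noteq> 0" using gp(3) by auto
  have m1: "g^2 * g^4 = g^6" by (simp flip: power_add)
  have m2: "g^6 * g^6 = g^4"
  proof -
    have "g^6 * g^6 = g^8 * g^4" by (simp flip: power_add)
    then show ?thesis using g8 by simp
  qed
  define H where "H = {v3 1 1 1, v3 1 1 (g^2), v3 1 (g^2) (g^6), v3 1 (g^6) (g^4), v3 1 (g^4) 0, v3 0 0 (1::'a)}"
  have cov: "short_covering H"
  proof (rule cover_crit[where g=g and n=8 and Rw="{0,2,6,4}" and Cw="{0,2,6,4}" and Dw="{0,2,4,6}"])
    show "g ^ 8 = 1" by (rule g8)
    show "\<forall>y. y \<noteq> 0 \<longrightarrow> (\<exists>i<8. y = g ^ i)" by (rule gen)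
    show "\<exists>h\<in>H. h \<noteq> 0 \<and> h $ 3 = 0" unfolding H_def by (simp add: v3_nz)
    show "\<exists>h\<in>H. h \<noteq> 0 \<and> h $ 2 = 0" unfolding H_def by (simp add: v3_nz)
    show "\<exists>h\<in>H. h \<noteq> 0 \<and> h $ 1 = 0" unfolding H_def by (simp add: v3_nz)
    show "\<forall>a\<in>{0,2,6,4::nat}. \<exists>h\<in>H. h $ 1 \<noteq> 0 \<and> h $ 2 = h $ 1 * g ^ a" unfolding H_def by simp
    show "\<forall>b\<in>{0,2,6,4::nat}. \<exists>h\<in>H. h $ 1 \<noteq> 0 \<and> h $ 3 = h $ 1 * g ^ b" unfolding H_def by simp
    show "\<forall>c\<in>{0,2,4,6::nat}. \<exists>h\<in>H. h $ 2 \<noteq> 0 \<and> h $ 3 = h $ 2 * g ^ c" unfolding H_def using m1 m2 gnz g by simp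
    show "\<forall>i<(8::nat). \<forall>j<(8::nat). i \<in> {0,2,6,4} \<or> j \<in> {0,2,6,4} \<or> (\<exists>c\<in>{0,2,4,6::nat}. (i + c) mod 8 = j)" by (rule grid9)
  qed
  have card: "card H = 6" unfolding H_def using ds gnz g by (simp add: v3_eq_iff card_insert_if)
  show ?thesis unfolding c_cov_def
  proof (rule Least_equality)
    show "\<exists>H :: ('a^3) set. short_covering H \<and> card H = 6" using cov card by blast
  next
    fix m assume "\<exists>H :: ('a^3) set. short_covering H \<and> card H = m"
    then obtain H' :: "('a^3) set" where H': "short_covering H'" "card H' = m" by blast
    show "6 \<le> m"
    proof (rule ccontr)
      assume "\<not> 6 \<le> m"
      then have "card H' < CARD('a) - 1" using H' assms by simp
      then have "3 * (CARD('a) - 1) + 10 \<le> 6 * card H'" using lower[OF H'(1)] by blast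
      then show False using H' assms \<open>\<not> 6 \<le> m\<close> by simp
    qed
  qed
qed

theorem theorem2:
  assumes "CARD('a::{field,finite}) = 7"
      and "CARD('b::{field,finite}) = 8"
      and "CARD('c::{field,finite}) = 9"
  shows "c_cov TYPE('a) = 5 \<and> c_cov TYPE('b) = 6 \<and> c_cov TYPE('c) = 6"
  using c7[OF assms(1)] c8[OF assms(2)] c9[OF assms(3)] by simp


end
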